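(* Consider the Hecke operators $T_p$ of level $9$ acting on $\mathcal{M}(9)$, for primes $p\ne3$. Then: (a) $JT_pJ=T_p$ for all primes $p\neq3$; (b) $T_pT^{1/3}=T^{1/3}T_p$ if $p\equiv1\bmod3$; (c) $T_pT^{1/3}=T^{-1/3}T_p$ if $p\equiv2\bmod3$.
   Context: $\mathcal{M}(9)$ denotes a space of Maass cusp forms on $\Gamma_0(9)$ with fixed Laplace eigenvalue (real-analytic $\Gamma_0(9)$-invariant eigenfunctions of $-y^2(\partial_x^2+\partial_y^2)$ on the upper half-plane, vanishing at cusps, square-integrable). The Hecke operator of level $9$ is $T_n\varphi(z)=n^{-1/2}\sum_{ad=n,\,a>0,\,(a,9)=1}\sum_{b\bmod d}\varphi(\frac{az+b}{d})$. The operators $J$, $T^{1/3}$, $T^{-1/3}$ act by $(J\varphi)(z)=\varphi(-\bar z)$, $(T^{\pm1/3}\varphi)(z)=\varphi(z\pm\frac13)$ (these preserve $\mathcal{M}(9)$). *)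

theory Defs
  imports "HOL-Analysis.Analysis" "HOL-Computational_Algebra.Primes"
begin

definition uhp :: "complex set" where
  "uhp = {z. Im z > 0}"

definition moeb :: "int \<Rightarrow> int \<Rightarrow> int \<Rightarrow> int \<Rightarrow> complex \<Rightarrow> complex" where
  "moeb a b c d z = (of_int a * z + of_int b) / (of_int c * z + of_int d)"

definition dx :: "(complex \<Rightarrow> complex) \<Rightarrow> complex \<Rightarrow> complex" where
  "dx f z = vector_derivative (\<lambda>t::real. f (z + of_real t)) (at 0)"

definition dy :: "(complex \<Rightarrow> complex) \<Rightarrow> complex \<Rightarrow> complex" where
  "dy f z = vector_derivative (\<lambda>t::real. f (z + \<i> * of_real t)) (at 0)"

definition std_fd :: "complex set" where
  "std_fd = {z. Im z > 0 \<and> \<bar>Re z\<bar> \<le> 1/2 \<and> cmod z \<ge> 1}"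

text \<open>Maass cusp forms on Gamma_0(9) with Laplace eigenvalue lam
  (functions are regarded through their values on the upper half-plane).\<close>
definition maass_cusp_forms_9 :: "real \<Rightarrow> (complex \<Rightarrow> complex) set" where
  "maass_cusp_forms_9 lam = {phi.
     \<comment> \<open>C^2 in the real sense on the upper half-plane\<close>
     phi differentiable_on uhp \<and>
     dx phi differentiable_on uhp \<and> dy phi differentiable_on uhp \<and>
     continuous_on uhp (dx (dx phi)) \<and> continuous_on uhp (dx (dy phi)) \<and>
     continuous_on uhp (dy (dx phi)) \<and> continuous_on uhp (dy (dy phi)) \<and>
     \<comment> \<open>Laplace eigenfunction\<close>
     (\<forall>z\<in>uhp. - (complex_of_real ((Im z)\<^sup>2)) * (dx (dx phi) z + dy (dy phi) z)
                 = complex_of_real lam * phi z) \<and>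
     \<comment> \<open>Gamma_0(9)-invariance\<close>
     (\<forall>a b c d. a * d - b * c = 1 \<longrightarrow> 9 dvd c \<longrightarrow>
        (\<forall>z\<in>uhp. phi (moeb a b c d z) = phi z)) \<and>
     \<comment> \<open>vanishing at all cusps: zero constant term at every cusp
         (9 is a multiple of every cusp width of Gamma_0(9))\<close>
     (\<forall>a b c d. a * d - b * c = 1 \<longrightarrow>
        (\<forall>y>0. integral {0..9} (\<lambda>x. phi (moeb a b c d (Complex x y))) = 0)) \<and>
     \<comment> \<open>square integrable on the quotient of H by Gamma_0(9) (= on the finitely many SL2(Z)-translates
         of the standard fundamental domain), w.r.t. dx dy / y^2\<close>
     (\<forall>a b c d. a * d - b * c = 1 \<longrightarrow>
        (\<lambda>z. (cmod (phi (moeb a b c d z)))\<^sup>2 / (Im z)\<^sup>2) absolutely_integrable_on std_fd)}"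

definition hecke9 :: "nat \<Rightarrow> (complex \<Rightarrow> complex) \<Rightarrow> complex \<Rightarrow> complex" where
  "hecke9 n phi z = complex_of_real (1 / sqrt (real n)) *
     (\<Sum>a\<in>{a. a dvd n \<and> a > 0 \<and> coprime a 9}.
        \<Sum>b\<in>{0..<n div a}. phi ((of_nat a * z + of_nat b) / of_nat (n div a)))"

definition opJ :: "(complex \<Rightarrow> complex) \<Rightarrow> complex \<Rightarrow> complex" where
  "opJ phi z = phi (- cnj z)"

definition shift :: "real \<Rightarrow> (complex \<Rightarrow> complex) \<Rightarrow> complex \<Rightarrow> complex" where
  "shift s phi z = phi (z + of_real s)"

end

theory Submission imports Defs begin

lemma per:
  assumes "phi \<in> maass_cusp_forms_9 lam" "Im w > 0"
  shows "phi (w + of_int n) = phi w"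
proof -
  have "\<forall>a b c d. a * d - b * c = 1 \<longrightarrow> 9 dvd c \<longrightarrow>
        (\<forall>z\<in>uhp. phi (moeb a b c d z) = phi z)" using assms(1) unfolding maass_cusp_forms_9_def by blast
  hence "phi (moeb 1 n 0 1 w) = phi w" using assms(2) by (auto simp: uhp_def)
  thus ?thesis by (simp add: moeb_def)
qed

lemma shiftsum:
  fixes p :: nat and m :: int
  assumes P: "\<And>w n. Im w > 0 \<Longrightarrow> phi (w + of_int n) = phi w" and p: "p > 0" and w: "Im w > 0"
  shows "(\<Sum>b\<in>{0..<p}. phi ((w + of_nat b + of_int m) / of_nat p))
       = (\<Sum>b\<in>{0..<p}. phi ((w + of_nat b) / of_nat p))"
proof -
  define h where "h b = nat ((int b + m) mod int p)" for b
  have eq: "phi ((w + of_nat b + of_int m) / of_nat p) = phi ((w + of_nat (h b)) / of_nat p)" for b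
  proof -
    have hb: "int (h b) = (int b + m) mod int p" using p by (simp add: h_def)
    note hb
    have "of_int (int b + m) = (of_int ((int b + m) mod int p) :: complex) + of_int ((int b + m) div int p) * of_nat p"
      by (metis mod_div_mult_eq of_int_add of_int_mult of_int_of_nat_eq)
    hence "(w + of_nat b + of_int m) / of_nat p = (w + of_nat (h b)) / of_nat p + of_int ((int b + m) div int p)"
      using p hb by (simp add: field_simps) (metis of_int_of_nat_eq)
    moreover have "Im ((w + of_nat (h b)) / of_nat p) > 0" using w p by simp
    ultimately show ?thesis using P by simp
  qed
  have inj: "inj_on h {0..<p}"
  proof
    fix x y assume "x \<in> {0..<p}" "y \<in> {0..<p}" "h x = h y"
    hence "int (h x) = int (h y)" "x < p" "y < p" by auto
    moreover have "int (h b) = (int b + m) mod int p" for b using p by (simp add: h_def)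
    ultimately have "(int x + m) mod int p = (int y + m) mod int p" "x < p" "y < p" by simp_all
    hence "int x mod int p = int y mod int p" using mod_add_cong[of "int x + m" "int p" "int y + m" "-m"] by simp
    thus "x = y" using \<open>x<p\<close> \<open>y<p\<close> by simp
  qed
  have img: "h ` {0..<p} \<subseteq> {0..<p}" using p by (auto simp: h_def nat_less_iff)
  have bij: "bij_betw h {0..<p} {0..<p}"
    using inj img by (simp add: bij_betw_def endo_inj_surj)
  have "(\<Sum>b\<in>{0..<p}. phi ((w + of_nat b + of_int m) / of_nat p)) = (\<Sum>b\<in>{0..<p}. phi ((w + of_nat (h b)) / of_nat p))"
    using eq by simp
  also have "\<dots> = (\<Sum>b\<in>{0..<p}. phi ((w + of_nat b) / of_nat p))"
    using sum.reindex_bij_betw[OF bij, of "\<lambda>b. phi ((w + of_nat b) / of_nat p)"] by simp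
  finally show ?thesis .
qed

lemma hecke_p:
  assumes "prime p" "p \<noteq> 3"
  shows "hecke9 p phi z = complex_of_real (1 / sqrt (real p)) *
     ((\<Sum>b\<in>{0..<p}. phi ((z + of_nat b) / of_nat p)) + phi (of_nat p * z))"
proof -
  have "{a. a dvd p \<and> a > 0 \<and> coprime a 9} = {1, p}"
  proof -
    have "coprime p 9"
    proof (rule prime_imp_coprime[OF assms(1)], rule notI)
      assume "p dvd 9"
      hence "p dvd 3 * 3" by simp
      hence "p dvd 3" using assms(1) prime_dvd_mult_iff by blast
      moreover have "prime (3::nat)" by simp
      ultimately show False using assms primes_dvd_imp_eq by blast
    qed
    thus ?thesis using assms(1) prime_nat_iff by (auto simp: prime_gt_0_nat)
  qed
  moreover have "p \<noteq> 1" using assms prime_gt_1_nat by fastforce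
  ultimately show ?thesis unfolding hecke9_def using assms(1) by (simp add: prime_gt_0_nat add.commute)
qed

theorem lemma6p1:
  fixes lam :: real and phi :: "complex \<Rightarrow> complex" and p :: nat
  assumes "phi \<in> maass_cusp_forms_9 lam" and "prime p" and "p \<noteq> 3"
  shows "(\<forall>z\<in>uhp. opJ (hecke9 p (opJ phi)) z = hecke9 p phi z)
       \<and> (p mod 3 = 1 \<longrightarrow>
            (\<forall>z\<in>uhp. hecke9 p (shift (1/3) phi) z = shift (1/3) (hecke9 p phi) z))
       \<and> (p mod 3 = 2 \<longrightarrow>
            (\<forall>z\<in>uhp. hecke9 p (shift (1/3) phi) z = shift (-1/3) (hecke9 p phi) z))"
proof -
  have P: "\<And>w n. Im w > 0 \<Longrightarrow> phi (w + of_int n) = phi w" using per[OF assms(1)] by blast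
  have p0: "p > 0" using assms(2) prime_gt_0_nat by blast
  have pc: "(of_nat p :: complex) \<noteq> 0" using p0 by simp
  note H = hecke_p[OF assms(2,3)]
  define c where "c = complex_of_real (1 / sqrt (real p))"
  have A: "opJ (hecke9 p (opJ phi)) z = hecke9 p phi z" if z: "z \<in> uhp" for z
  proof -
    have iz: "Im z > 0" using z by (simp add: uhp_def)
    have e1: "- cnj ((- cnj z + of_nat b) / of_nat p) = (z - of_nat b) / of_nat p" for b
      by (simp add: complex_eq_iff diff_divide_distrib)
    have e2: "- cnj (of_nat p * - cnj z) = of_nat p * z" by (simp add: complex_eq_iff)
    have "(\<Sum>b\<in>{0..<p}. phi ((z - of_nat b) / of_nat p))
        = (\<Sum>b\<in>{0..<p}. phi ((z - of_nat (p + 0 - Suc b)) / of_nat p))"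
      by (rule sum.atLeastLessThan_rev)
    also have "\<dots> = (\<Sum>b\<in>{0..<p}. phi ((z + of_nat b + of_int (1 - int p)) / of_nat p))"
    proof (rule sum.cong[OF refl])
      fix b assume "b \<in> {0..<p}"
      hence "of_nat (p + 0 - Suc b) = (of_nat p - 1 - of_nat b :: complex)" by (simp add: of_nat_diff)
      hence "z - of_nat (p + 0 - Suc b) = z + of_nat b + of_int (1 - int p)" by simp
      thus "phi ((z - of_nat (p + 0 - Suc b)) / of_nat p) = phi ((z + of_nat b + of_int (1 - int p)) / of_nat p)"
        by (simp only:)
    qed
    also have "\<dots> = (\<Sum>b\<in>{0..<p}. phi ((z + of_nat b) / of_nat p))"
      by (rule shiftsum[OF P p0 iz])
    finally show ?thesis unfolding opJ_def H e1 e2 by simp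
  qed
  have B: "hecke9 p (shift (1/3) phi) z = shift (1/3) (hecke9 p phi) z"
    if z: "z \<in> uhp" and pm: "p mod 3 = 1" for z
  proof -
    define k where "k = p div 3"
    have pk: "p = 3 * k + 1" using pm unfolding k_def by presburger
    define w where "w = z + 1/3"
    have iw: "Im w > 0" using z by (simp add: uhp_def w_def)
    have "(\<Sum>b\<in>{0..<p}. phi ((z + of_nat b) / of_nat p + of_real (1/3)))
        = (\<Sum>b\<in>{0..<p}. phi ((w + of_nat b + of_int (int k)) / of_nat p))"
    proof (rule sum.cong[OF refl])
      fix b
      have "(z + of_nat b) / of_nat p + of_real (1/3) = (w + of_nat b + of_int (int k)) / of_nat p"
        using pc unfolding w_def pk by (simp add: field_simps)
      thus "phi ((z + of_nat b) / of_nat p + of_real (1/3)) = phi ((w + of_nat b + of_int (int k)) / of_nat p)"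
        by simp
    qed
    also have "\<dots> = (\<Sum>b\<in>{0..<p}. phi ((w + of_nat b) / of_nat p))"
      by (rule shiftsum[OF P p0 iw])
    finally have s: "(\<Sum>b\<in>{0..<p}. phi ((z + of_nat b) / of_nat p + of_real (1/3)))
        = (\<Sum>b\<in>{0..<p}. phi ((w + of_nat b) / of_nat p))" .
    have "of_nat p * w = (of_nat p * z + of_real (1/3)) + of_int (int k)"
      unfolding w_def pk by (simp add: field_simps)
    moreover have "Im (of_nat p * z + of_real (1/3)) > 0" using z p0 by (simp add: uhp_def)
    ultimately have t: "phi (of_nat p * w) = phi (of_nat p * z + of_real (1/3))" using P[of "of_nat p * z + of_real (1/3)"] by metis
    have "shift (1/3) (hecke9 p phi) z = hecke9 p phi w" by (simp add: shift_def w_def)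
    also have "\<dots> = c * ((\<Sum>b\<in>{0..<p}. phi ((w + of_nat b) / of_nat p)) + phi (of_nat p * w))"
      unfolding c_def by (rule H)
    also have "\<dots> = c * ((\<Sum>b\<in>{0..<p}. phi ((z + of_nat b) / of_nat p + of_real (1/3))) + phi (of_nat p * z + of_real (1/3)))"
      using s t by simp
    also have "\<dots> = hecke9 p (shift (1/3) phi) z" unfolding c_def H shift_def ..
    finally show ?thesis by (rule sym)
  qed
  have C: "hecke9 p (shift (1/3) phi) z = shift (-1/3) (hecke9 p phi) z"
    if z: "z \<in> uhp" and pm: "p mod 3 = 2" for z
  proof -
    define k where "k = p div 3"
    have pk: "p = 3 * k + 2" using pm unfolding k_def by presburger
    define w where "w = z - 1/3"
    have iw: "Im w > 0" using z by (simp add: uhp_def w_def)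
    have "(\<Sum>b\<in>{0..<p}. phi ((z + of_nat b) / of_nat p + of_real (1/3)))
        = (\<Sum>b\<in>{0..<p}. phi ((w + of_nat b + of_int (int k + 1)) / of_nat p))"
    proof (rule sum.cong[OF refl])
      fix b
      have "(z + of_nat b) / of_nat p + of_real (1/3) = (w + of_nat b + of_int (int k + 1)) / of_nat p"
        using pc unfolding w_def pk by (simp add: field_simps)
      thus "phi ((z + of_nat b) / of_nat p + of_real (1/3)) = phi ((w + of_nat b + of_int (int k + 1)) / of_nat p)"
        by simp
    qed
    also have "\<dots> = (\<Sum>b\<in>{0..<p}. phi ((w + of_nat b) / of_nat p))"
      by (rule shiftsum[OF P p0 iw])
    finally have s: "(\<Sum>b\<in>{0..<p}. phi ((z + of_nat b) / of_nat p + of_real (1/3)))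
        = (\<Sum>b\<in>{0..<p}. phi ((w + of_nat b) / of_nat p))" .
    have "of_nat p * w = (of_nat p * z + of_real (1/3)) + of_int (- int k - 1)"
      unfolding w_def pk by (simp add: field_simps)
    moreover have "Im (of_nat p * z + of_real (1/3)) > 0" using z p0 by (simp add: uhp_def)
    ultimately have t: "phi (of_nat p * w) = phi (of_nat p * z + of_real (1/3))" using P[of "of_nat p * z + of_real (1/3)"] by metis
    have "shift (-1/3) (hecke9 p phi) z = hecke9 p phi w" by (simp add: shift_def w_def)
    also have "\<dots> = c * ((\<Sum>b\<in>{0..<p}. phi ((w + of_nat b) / of_nat p)) + phi (of_nat p * w))"
      unfolding c_def by (rule H)
    also have "\<dots> = c * ((\<Sum>b\<in>{0..<p}. phi ((z + of_nat b) / of_nat p + of_real (1/3))) + phi (of_nat p * z + of_real (1/3)))"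
      using s t by simp
    also have "\<dots> = hecke9 p (shift (1/3) phi) z" unfolding c_def H shift_def ..
    finally show ?thesis by (rule sym)
  qed
  show ?thesis using A B C by blast
qed

end
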